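(* Let $D$ be a square-free integer, let $\mathbb{Z}[\sqrt{D}]$ denote the ring of integers of $\mathbb{Q}(\sqrt{D})$, and let $p$ be a prime integer which is irreducible but not prime in $\mathbb{Z}[\sqrt{D}]$. Let $z_0\in I_p(D)$ be a fundamental solution of the generalized Pell equation $x^2-y^2D=\lVert z_0\rVert$. If $z\in I_p(D)$ is in the same equivalence class as $z_0$, i.e. $z=z_0u$ for some unit $u$ of $\mathbb{Z}[\sqrt{D}]$ with $\lVert u\rVert=1$, then $A(p,z_0)\in \operatorname{ID}_2(\mathbb{Z}[\sqrt{D}])$ if and only if $A(p,z)\in\operatorname{ID}_2(\mathbb{Z}[\sqrt{D}])$. Furthermore, $A(p,z_0)$ has property (CZ) if and only if $A(p,z)$ has property (CZ).
   Context: Here $\mathbb{Z}[\sqrt{D}]=\{a+b\sqrt{D}:a,b\in\mathbb{Z}\}$ if $D\equiv 2,3 \pmod 4$ and $\mathbb{Z}[\sqrt{D}]=\{\frac{a+b\sqrt{D}}{2}:a,b\in\mathbb{Z},\ a\equiv b \pmod 2\}$ if $D\equiv 1\pmod 4$. $\bar z$ denotes the conjugate and $\lVert z\rVert=z\bar z$ the norm. $I_p(D)$ is the set of all non-unit $z\in\mathbb{Z}[\sqrt{D}]$ such that $z\notin\langle p\rangle$ but there exists $m\notin\langle p\rangle$ with $zm\in\langle p\rangle$ (for such $z$, $p$ divides $\lVert z\rVert$). For $z\in I_p(D)$, $A(p,z)=\begin{pmatrix} p & z\\ \bar z & \lVert z\rVert/p\end{pmatrix}$. For a ring $R$, $\operatorname{ID}_2(R)$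 is the set of $2\times 2$ matrices over $R$ that can be written as a product of (finitely many) idempotent matrices in $\mathbb{M}_2(R)$. A matrix $A(p,z)$ has property (CZ) if there exist $a,b,c\in\mathbb{Z}[\sqrt{D}]$ with $a(1-a)=bc$ such that $A(p,z)=\begin{pmatrix} a&b\\ c&1-a\end{pmatrix}\begin{pmatrix}\bar a&\bar c\\ \bar b&1-\bar a\end{pmatrix}$. *)

theory Defs
  imports "HOL-Analysis.Analysis" "HOL-Computational_Algebra.Squarefree"
    "HOL-Computational_Algebra.Primes"
begin

text \<open>We realise the ring Z[sqrt D] (ring of integers of Q(sqrt D)) as a subring of the
complex numbers, with a fixed choice of square root of D.\<close>

definition sqrtD :: "int \<Rightarrow> complex" where
  "sqrtD D = (if D \<ge> 0 then complex_of_real (sqrt (real_of_int D))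
              else \<i> * complex_of_real (sqrt (real_of_int (- D))))"

definition ZD :: "int \<Rightarrow> complex set" where
  "ZD D = (if D mod 4 = 1
           then {(of_int a + of_int b * sqrtD D) / 2 | a b :: int. a mod 2 = b mod 2}
           else {of_int a + of_int b * sqrtD D | a b :: int. True})"

text \<open>Coordinates: z = (a + b sqrt D)/2 with a, b integers.\<close>
definition coordD :: "int \<Rightarrow> complex \<Rightarrow> int \<times> int" where
  "coordD D z = (THE ab. z = (of_int (fst ab) + of_int (snd ab) * sqrtD D) / 2)"

text \<open>Conjugation a + b sqrt D \<mapsto> a - b sqrt D and the norm.\<close>
definition conjD :: "int \<Rightarrow> complex \<Rightarrow> complex" where
  "conjD D z = (of_int (fst (coordD D z)) - of_int (snd (coordD D z)) * sqrtD D) / 2"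

definition normD :: "int \<Rightarrow> complex \<Rightarrow> complex" where
  "normD D z = z * conjD D z"

definition dvdD :: "int \<Rightarrow> complex \<Rightarrow> complex \<Rightarrow> bool" where
  "dvdD D a b \<longleftrightarrow> (\<exists>c\<in>ZD D. b = a * c)"

definition unitD :: "int \<Rightarrow> complex \<Rightarrow> bool" where
  "unitD D u \<longleftrightarrow> u \<in> ZD D \<and> (\<exists>v\<in>ZD D. u * v = 1)"

definition irreducibleD :: "int \<Rightarrow> complex \<Rightarrow> bool" where
  "irreducibleD D p \<longleftrightarrow> p \<in> ZD D \<and> p \<noteq> 0 \<and> \<not> unitD D p \<and>
     (\<forall>x\<in>ZD D. \<forall>y\<in>ZD D. p = x * y \<longrightarrow> unitD D x \<or> unitD D y)"

definition primeD :: "int \<Rightarrow> complex \<Rightarrow> bool" where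
  "primeD D p \<longleftrightarrow> p \<in> ZD D \<and> p \<noteq> 0 \<and> \<not> unitD D p \<and>
     (\<forall>x\<in>ZD D. \<forall>y\<in>ZD D. dvdD D p (x * y) \<longrightarrow> dvdD D p x \<or> dvdD D p y)"

text \<open>The principal ideal generated by p.\<close>
definition idealD :: "int \<Rightarrow> complex \<Rightarrow> complex set" where
  "idealD D p = {p * w | w. w \<in> ZD D}"

definition Ip :: "int \<Rightarrow> int \<Rightarrow> complex set" where
  "Ip p D = {z \<in> ZD D. \<not> unitD D z \<and> z \<notin> idealD D (of_int p) \<and>
              (\<exists>m\<in>ZD D. m \<notin> idealD D (of_int p) \<and> z * m \<in> idealD D (of_int p))}"

definition Apz :: "int \<Rightarrow> int \<Rightarrow> complex \<Rightarrow> complex^2^2" where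
  "Apz D p z = vector [vector [of_int p, z], vector [conjD D z, normD D z / of_int p]]"

definition matD :: "int \<Rightarrow> complex^2^2 \<Rightarrow> bool" where
  "matD D M \<longleftrightarrow> (\<forall>i j. M $ i $ j \<in> ZD D)"

text \<open>Products of finitely many idempotent matrices over Z[sqrt D].\<close>
definition ID2 :: "int \<Rightarrow> (complex^2^2) set" where
  "ID2 D = {foldr (**) Es (mat 1) | Es. Es \<noteq> [] \<and>
              (\<forall>E\<in>set Es. matD D E \<and> E ** E = E)}"

definition propCZ :: "int \<Rightarrow> int \<Rightarrow> complex \<Rightarrow> bool" where
  "propCZ D p z \<longleftrightarrow> (\<exists>a\<in>ZD D. \<exists>b\<in>ZD D. \<exists>c\<in>ZD D. a * (1 - a) = b * c \<and>
     Apz D p z = (vector [vector [a, b], vector [c, 1 - a]] :: complex^2^2) **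
                 (vector [vector [conjD D a, conjD D c], vector [conjD D b, 1 - conjD D a]]
                   :: complex^2^2))"

text \<open>z and w lie in the same class of solutions of x^2 - y^2 D = N.\<close>
definition same_classD :: "int \<Rightarrow> complex \<Rightarrow> complex \<Rightarrow> bool" where
  "same_classD D z w \<longleftrightarrow> (\<exists>u. unitD D u \<and> normD D u = 1 \<and> w = z * u)"

text \<open>Fundamental solution of its class (Nagell): among the elements
(x + y sqrt D) of the class, y is the least nonnegative value; ties
(ambiguous classes) are broken by taking x maximal.  Coordinates are
stored doubled: x = a/2, y = b/2.\<close>
definition fundamental_solD :: "int \<Rightarrow> complex \<Rightarrow> bool" where
  "fundamental_solD D z0 \<longleftrightarrow> z0 \<in> ZD D \<and> snd (coordD D z0) \<ge> 0 \<and>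
     (\<forall>w. same_classD D z0 w \<longrightarrow> snd (coordD D z0) \<le> \<bar>snd (coordD D w)\<bar> \<and>
        (snd (coordD D w) = snd (coordD D z0) \<longrightarrow> fst (coordD D w) \<le> fst (coordD D z0)))"

end

theory Submission
  imports Defs
begin

lemma sqrtD_sq: "sqrtD D * sqrtD D = of_int D"
proof (cases "D \<ge> 0")
  case True
  have r: "sqrt (real_of_int D) * sqrt (real_of_int D) = real_of_int D" using True by simp
  have "sqrtD D * sqrtD D = complex_of_real (sqrt (real_of_int D) * sqrt (real_of_int D))"
    by (simp only: sqrtD_def if_P[OF True] of_real_mult)
  also have "\<dots> = of_int D" by (simp only: r of_real_of_int_eq)
  finally show ?thesis .
next
  case False
  have r: "sqrt (real_of_int (-D)) * sqrt (real_of_int (-D)) = real_of_int (-D)" using False by simp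
  have "sqrtD D * sqrtD D = (\<i> * \<i>) * complex_of_real (sqrt (real_of_int (-D)) * sqrt (real_of_int (-D)))"
    by (simp only: sqrtD_def if_not_P[OF False] of_real_mult mult_ac)
  also have "\<dots> = of_int D" by (simp only: r of_real_of_int_eq) simp
  finally show ?thesis .
qed

lemma indep:
  assumes sf: "squarefree D" and D1: "D \<noteq> 1"
    and eq: "of_int a + of_int b * sqrtD D = (0::complex)"
  shows "a = 0 \<and> b = 0"
proof -
  have "b = 0"
  proof (rule ccontr)
    assume b0: "b \<noteq> 0"
    show False
    proof (cases "D \<ge> 0")
      case False
      have "Im (of_int a + of_int b * sqrtD D) = of_int b * sqrt (real_of_int (-D))"
        using False by (simp add: sqrtD_def)
      moreover have "sqrt (real_of_int (-D)) > 0" using False by simp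
      ultimately show False using eq b0 by simp
    next
      case True
      have "complex_of_real (real_of_int a + real_of_int b * sqrt (real_of_int D)) = 0"
        using eq True by (simp add: sqrtD_def)
      then have "real_of_int a + real_of_int b * sqrt (real_of_int D) = 0"
        by (simp only: of_real_eq_0_iff)
      then have "real_of_int b * sqrt (real_of_int D) = - real_of_int a" by linarith
      then have "(real_of_int b * sqrt (real_of_int D))^2 = (real_of_int a)^2" by simp
      then have "real_of_int b ^2 * real_of_int D = (real_of_int a)^2"
        using True by (simp add: power_mult_distrib)
      then have "real_of_int (b^2 * D) = real_of_int (a^2)" by simp
      then have ab: "b^2 * D = a^2" by (simp only: of_int_eq_iff)
      have "b^2 dvd a^2" unfolding ab[symmetric] by simp
      then have "b dvd a" by simp
      then obtain k where k: "a = b * k" by blast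
      have "b^2 * D = b^2 * k^2" using ab k by (simp add: power_mult_distrib)
      then have Dk: "D = k^2" using b0 by simp
      then have "k^2 dvd D" by simp
      then have "k dvd 1" by (rule squarefreeD[OF sf])
      then have k1: "\<bar>k\<bar> = 1" by simp
      have "k^2 = \<bar>k\<bar>^2" by simp
      also have "\<dots> = 1" using k1 by simp
      finally have "k^2 = 1" .
      then show False using Dk D1 by simp
    qed
  qed
  then show ?thesis using eq by simp
qed

definition parD :: "int \<Rightarrow> int \<Rightarrow> int \<Rightarrow> bool" where
  "parD D a b \<longleftrightarrow> (if D mod 4 = 1 then a mod 2 = b mod 2 else even a \<and> even b)"

lemma ZD_iff: "z \<in> ZD D \<longleftrightarrow> (\<exists>a b. z = (of_int a + of_int b * sqrtD D) / 2 \<and> parD D a b)"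
proof (cases "D mod 4 = 1")
  case True
  then show ?thesis by (auto simp: ZD_def parD_def)
next
  case False
  show ?thesis
  proof
    assume "z \<in> ZD D"
    then obtain a b where "z = of_int a + of_int b * sqrtD D" using False by (auto simp: ZD_def)
    then have "z = (of_int (2*a) + of_int (2*b) * sqrtD D) / 2 \<and> parD D (2*a) (2*b)"
      using False by (simp add: parD_def field_simps)
    then show "\<exists>a b. z = (of_int a + of_int b * sqrtD D) / 2 \<and> parD D a b" by blast
  next
    assume "\<exists>a b. z = (of_int a + of_int b * sqrtD D) / 2 \<and> parD D a b"
    then obtain a b where ab: "z = (of_int a + of_int b * sqrtD D) / 2" "even a" "even b"
      using False by (auto simp: parD_def)
    then obtain a' b' where "a = 2*a'" "b = 2*b'" by (meson evenE)
    then have "z = (2 * of_int a' + 2 * of_int b' * sqrtD D) / 2" using ab by simp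
    also have "\<dots> = of_int a' + of_int b' * sqrtD D" by (simp add: add_divide_distrib)
    finally have "z = of_int a' + of_int b' * sqrtD D" .
    then show "z \<in> ZD D" using False by (auto simp: ZD_def)
  qed
qed

lemma coord_eq:
  assumes sf: "squarefree D" and D1: "D \<noteq> 1"
    and z: "z = (of_int a + of_int b * sqrtD D) / 2"
  shows "coordD D z = (a, b)"
  unfolding coordD_def
proof (rule the_equality)
  show "z = (of_int (fst (a, b)) + of_int (snd (a, b)) * sqrtD D) / 2" using z by simp
next
  fix ab :: "int \<times> int"
  assume h: "z = (of_int (fst ab) + of_int (snd ab) * sqrtD D) / 2"
  have e: "(of_int a + of_int b * sqrtD D) / 2 = (of_int (fst ab) + of_int (snd ab) * sqrtD D) / (2::complex)"
    using trans[OF z[symmetric] h] .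
  have "of_int a + of_int b * sqrtD D = 2 * ((of_int a + of_int b * sqrtD D) / (2::complex))" by simp
  also have "\<dots> = 2 * ((of_int (fst ab) + of_int (snd ab) * sqrtD D) / (2::complex))" by (simp only: e)
  also have "\<dots> = of_int (fst ab) + of_int (snd ab) * sqrtD D" by simp
  finally have e2: "of_int a + of_int b * sqrtD D = of_int (fst ab) + of_int (snd ab) * sqrtD D" .
  have "of_int (a - fst ab) + of_int (b - snd ab) * sqrtD D = (of_int a + of_int b * sqrtD D) - (of_int (fst ab) + of_int (snd ab) * sqrtD D)"
    by (simp add: algebra_simps)
  also have "\<dots> = 0" by (simp only: e2 diff_self)
  finally have "of_int (a - fst ab) + of_int (b - snd ab) * sqrtD D = 0" .
  then have "a - fst ab = 0 \<and> b - snd ab = 0" by (rule indep[OF sf D1])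
  then show "ab = (a, b)" by (cases ab) simp
qed

lemma conj_eq:
  assumes sf: "squarefree D" and D1: "D \<noteq> 1"
    and z: "z = (of_int a + of_int b * sqrtD D) / 2"
  shows "conjD D z = (of_int a - of_int b * sqrtD D) / 2"
  using coord_eq[OF assms] by (simp add: conjD_def)

lemma par_mult:
  assumes "parD D a b" "parD D c d"
  shows "\<exists>A B. parD D A B \<and> 2*A = a*c + b*d*D \<and> 2*B = a*d + b*c"
proof (cases "D mod 4 = 1")
  case True
  then obtain k where k: "D = 4*k+1" by (metis mult.commute div_mult_mod_eq)
  from assms True have "a mod 2 = b mod 2" "c mod 2 = d mod 2" by (auto simp: parD_def)
  then obtain m n where mn: "a = b + 2*m" "c = d + 2*n"
    by (metis add.commute mod_eq_dvd_iff dvd_def diff_eq_eq mult.commute)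
  define B where "B = b*d + m*d + b*n"
  define t where "t = m*n + k*b*d"
  define A where "A = B + 2*t"
  have "parD D A B" using True by (simp add: parD_def A_def)
  moreover have "2*A = a*c + b*d*D" unfolding A_def B_def t_def mn k by (simp add: algebra_simps)
  moreover have "2*B = a*d + b*c" unfolding B_def mn by (simp add: algebra_simps)
  ultimately show ?thesis by blast
next
  case False
  from assms False obtain a' b' c' d' where ab: "a = 2*a'" "b = 2*b'" "c = 2*c'" "d = 2*d'"
    by (auto simp: parD_def elim!: evenE)
  define A where "A = 2*(a'*c' + b'*d'*D)"
  define B where "B = 2*(a'*d' + b'*c')"
  have "parD D A B" using False by (simp add: parD_def A_def B_def)
  moreover have "2*A = a*c + b*d*D" unfolding A_def ab by (simp add: algebra_simps)
  moreover have "2*B = a*d + b*c" unfolding B_def ab by (simp add: algebra_simps)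
  ultimately show ?thesis by blast
qed

lemma ZD_mult_conj:
  assumes sf: "squarefree D" and D1: "D \<noteq> 1" and x: "x \<in> ZD D" and y: "y \<in> ZD D"
  shows "x * y \<in> ZD D \<and> conjD D (x * y) = conjD D x * conjD D y"
proof -
  obtain a b where ab: "x = (of_int a + of_int b * sqrtD D) / 2" "parD D a b" using x ZD_iff by blast
  obtain c d where cd: "y = (of_int c + of_int d * sqrtD D) / 2" "parD D c d" using y ZD_iff by blast
  obtain A B where AB: "parD D A B" "2*A = a*c + b*d*D" "2*B = a*d + b*c"
    using par_mult[OF ab(2) cd(2)] by blast
  let ?s = "sqrtD D"
  have s2: "?s * ?s = of_int D" by (rule sqrtD_sq)
  have A2: "2 * (of_int A :: complex) = of_int a * of_int c + of_int b * of_int d * of_int D"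
    using arg_cong[OF AB(2), of "of_int :: int \<Rightarrow> complex"] by simp
  have B2: "2 * (of_int B :: complex) = of_int a * of_int d + of_int b * of_int c"
    using arg_cong[OF AB(3), of "of_int :: int \<Rightarrow> complex"] by simp
  have prod: "x * y = (of_int A + of_int B * ?s) / 2"
  proof -
    have "x * y = ((of_int a * of_int c + of_int b * of_int d * (?s * ?s)) + (of_int a * of_int d + of_int b * of_int c) * ?s) / 4"
      unfolding ab(1) cd(1) by (simp add: field_simps)
    also have "\<dots> = ((2 * of_int A) + (2 * of_int B) * ?s) / 4" by (simp only: A2 B2 s2)
    also have "\<dots> = (of_int A + of_int B * ?s) / 2" by (simp add: add_divide_distrib)
    finally show ?thesis .
  qed
  have "conjD D (x * y) = (of_int A - of_int B * ?s) / 2" by (rule conj_eq[OF sf D1 prod])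
  also have "\<dots> = ((2 * of_int A) - (2 * of_int B) * ?s) / 4" by simp
  also have "\<dots> = ((of_int a * of_int c + of_int b * of_int d * (?s * ?s)) - (of_int a * of_int d + of_int b * of_int c) * ?s) / 4"
    by (simp only: A2 B2 s2)
  also have "\<dots> = conjD D x * conjD D y"
    unfolding conj_eq[OF sf D1 ab(1)] conj_eq[OF sf D1 cd(1)] by (simp add: field_simps)
  finally show ?thesis using prod AB(1) ZD_iff by blast
qed

lemma ZD_conj:
  assumes sf: "squarefree D" and D1: "D \<noteq> 1" and x: "x \<in> ZD D"
  shows "conjD D x \<in> ZD D \<and> conjD D (conjD D x) = x"
proof -
  obtain a b where ab: "x = (of_int a + of_int b * sqrtD D) / 2" "parD D a b" using x ZD_iff by blast
  have c: "conjD D x = (of_int a + of_int (-b) * sqrtD D) / 2" using conj_eq[OF sf D1 ab(1)] by simp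
  have "parD D a (-b)" using ab(2) by (auto simp: parD_def) presburger
  moreover have e: "(of_int a - of_int (-b) * sqrtD D) / 2 = x" using ab(1) by simp
  have "conjD D (conjD D x) = x" using conj_eq[OF sf D1 c] e by (rule trans)
  ultimately show ?thesis using c ZD_iff by blast
qed

lemma ZD_0: "0 \<in> ZD D"
proof -
  have "(0::complex) = (of_int 0 + of_int 0 * sqrtD D) / 2 \<and> parD D 0 0" by (simp add: parD_def)
  then show ?thesis using ZD_iff by blast
qed

lemma ZD_1: "1 \<in> ZD D"
proof (cases "D mod 4 = 1")
  case True
  have "(1::complex) = (of_int 2 + of_int 0 * sqrtD D) / 2 \<and> parD D 2 0" using True by (simp add: parD_def)
  then show ?thesis using ZD_iff by blast
next
  case False
  have "(1::complex) = (of_int 2 + of_int 0 * sqrtD D) / 2 \<and> parD D 2 0" using False by (simp add: parD_def)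
  then show ?thesis using ZD_iff by blast
qed


lemma mat2_mult:
  "(vector [vector [a, b], vector [c, d]] :: 'a::comm_ring_1^2^2) ** (vector [vector [e, f], vector [g, h]] :: 'a^2^2)
   = vector [vector [a*e + b*g, a*f + b*h], vector [c*e + d*g, c*f + d*h]]"
  by (simp add: matrix_matrix_mult_def vec_eq_iff forall_2 sum_2)

lemma mat2_eq:
  "((vector [vector [a, b], vector [c, d]] :: 'a::zero^2^2) = (vector [vector [e, f], vector [g, h]] :: 'a^2^2))
   \<longleftrightarrow> a = e \<and> b = f \<and> c = g \<and> d = h"
  by (auto simp add: vec_eq_iff forall_2)

lemma mat1_2: "(mat 1 :: 'a::comm_ring_1^2^2) = vector [vector [1, 0], vector [0, 1]]"
  by (simp add: vec_eq_iff forall_2 mat_def)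

lemma mat2_repr: "(M :: 'a::zero^2^2) = vector [vector [M$1$1, M$1$2], vector [M$2$1, M$2$2]]"
  by (simp add: vec_eq_iff forall_2)

lemma cz_alg:
  fixes u w a b c ca cb cc P Z CZ Q :: complex
  assumes "u*w = 1" "P = a*ca + b*cb" "Z = a*cc + b*(1-ca)" "CZ = c*ca + (1-a)*cb"
    "Q = c*cc + (1-a)*(1-ca)"
  shows "P = a*ca + (b*u)*(cb*w)" "Z*u = a*(cc*u) + (b*u)*(1-ca)"
    "w*CZ = (c*w)*ca + (1-a)*(cb*w)" "Q = (c*w)*(cc*u) + (1-a)*(1-ca)"
  using assms by algebra+


lemma cancel_uw: "u * w = 1 \<Longrightarrow> w * x * u = (x::complex)"
proof -
  assume h: "u * w = 1"
  have "w * x * u = x * (u * w)" by (simp only: mult.commute mult.left_commute mult.assoc)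
  then show ?thesis using h by simp
qed

lemma foldr_conj:
  fixes U V :: "complex^2^2"
  assumes UV: "U ** V = mat 1" and VU: "V ** U = mat 1"
  shows "foldr (**) (map (\<lambda>E. V ** E ** U) Es) (mat 1) = V ** foldr (**) Es (mat 1) ** U"
proof (induction Es)
  case Nil
  then show ?case using VU by simp
next
  case (Cons E Es)
  let ?F = "foldr (**) Es (mat 1)"
  have "foldr (**) (map (\<lambda>E. V ** E ** U) (E # Es)) (mat 1) = (V ** E ** U) ** (V ** ?F ** U)"
    using Cons by simp
  also have "\<dots> = V ** E ** (U ** V) ** ?F ** U" by (simp only: matrix_mul_assoc)
  also have "\<dots> = V ** E ** ?F ** U" by (simp add: UV)
  also have "\<dots> = V ** foldr (**) (E # Es) (mat 1) ** U" by (simp add: matrix_mul_assoc)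
  finally show ?case .
qed

lemma transfer:
  assumes sf: "squarefree D" and D1: "D \<noteq> 1" and z0: "z0 \<in> ZD D" and u: "u \<in> ZD D"
    and cu: "conjD D u \<in> ZD D" and uu: "u * conjD D u = 1"
  shows "(Apz D p z0 \<in> ID2 D \<longrightarrow> Apz D p (z0*u) \<in> ID2 D) \<and> (propCZ D p z0 \<longrightarrow> propCZ D p (z0*u))"
proof -
  let ?w = "conjD D u"
  define U where "U = (vector [vector [1, 0], vector [0, u]] :: complex^2^2)"
  define V where "V = (vector [vector [1, 0], vector [0, ?w]] :: complex^2^2)"
  have wu: "?w * u = 1" using uu by (simp add: mult.commute)
  have UV: "U ** V = mat 1" unfolding U_def V_def mat2_mult mat1_2 by (simp add: uu)
  have VU: "V ** U = mat 1" unfolding U_def V_def mat2_mult mat1_2 by (simp add: wu)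
  have cz: "conjD D (z0*u) = conjD D z0 * ?w" using ZD_mult_conj[OF sf D1 z0 u] by simp
  have nz: "normD D (z0*u) = normD D z0"
  proof -
    have "normD D (z0*u) = (z0 * conjD D z0) * (u * ?w)" unfolding normD_def cz
      by (simp only: mult.commute mult.left_commute mult.assoc)
    then show ?thesis using uu by (simp add: normD_def)
  qed
  have A: "Apz D p (z0*u) = V ** Apz D p z0 ** U"
    unfolding Apz_def U_def V_def mat2_mult cz nz mat2_eq
    using cancel_uw[OF uu, of "normD D z0 / of_int p"] by (simp add: mult.commute)
  have part1: "Apz D p z0 \<in> ID2 D \<longrightarrow> Apz D p (z0*u) \<in> ID2 D"
  proof
    assume "Apz D p z0 \<in> ID2 D"
    then obtain Es where Es: "Apz D p z0 = foldr (**) Es (mat 1)" "Es \<noteq> []"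
      "\<forall>E\<in>set Es. matD D E \<and> E ** E = E" unfolding ID2_def by blast
    let ?Es = "map (\<lambda>E. V ** E ** U) Es"
    have "Apz D p (z0*u) = foldr (**) ?Es (mat 1)"
      unfolding A Es(1) foldr_conj[OF UV VU] ..
    moreover have "?Es \<noteq> []" using Es(2) by simp
    moreover have "\<forall>E\<in>set ?Es. matD D E \<and> E ** E = E"
    proof
      fix F assume "F \<in> set ?Es"
      then obtain E where E: "E \<in> set Es" "F = V ** E ** U" by auto
      have mE: "matD D E" and iE: "E ** E = E" using Es(3) E(1) by auto
      have "F ** F = V ** E ** (U ** V) ** E ** U" unfolding E(2) by (simp only: matrix_mul_assoc)
      also have "\<dots> = V ** (E ** E) ** U" by (simp add: UV matrix_mul_assoc)
      also have "\<dots> = F" using iE E(2) by simp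
      finally have idem: "F ** F = F" .
      have e: "\<And>i j. E $ i $ j \<in> ZD D" using mE unfolding matD_def by blast
      have mul: "\<And>x y. x \<in> ZD D \<Longrightarrow> y \<in> ZD D \<Longrightarrow> x * y \<in> ZD D"
        using ZD_mult_conj[OF sf D1] by blast
      have "F = vector [vector [E$1$1, E$1$2 * u], vector [?w * E$2$1, ?w * E$2$2 * u]]"
        unfolding E(2) U_def V_def by (subst mat2_repr[of E], simp only: mat2_mult, simp)
      then have "matD D F" unfolding matD_def
        using e mul u cu by (simp add: forall_2)
      then show "matD D F \<and> F ** F = F" using idem by simp
    qed
    ultimately show "Apz D p (z0*u) \<in> ID2 D" unfolding ID2_def by blast
  qed
  have part2: "propCZ D p z0 \<longrightarrow> propCZ D p (z0*u)"
  proof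
    assume "propCZ D p z0"
    then obtain a b c where abc: "a \<in> ZD D" "b \<in> ZD D" "c \<in> ZD D" "a * (1 - a) = b * c"
      and M: "Apz D p z0 = (vector [vector [a, b], vector [c, 1 - a]] :: complex^2^2) **
                 (vector [vector [conjD D a, conjD D c], vector [conjD D b, 1 - conjD D a]])"
      unfolding propCZ_def by blast
    have bu: "b * u \<in> ZD D" and cbu: "conjD D (b*u) = conjD D b * ?w"
      using ZD_mult_conj[OF sf D1 abc(2) u] by auto
    have cw: "c * ?w \<in> ZD D" and ccw: "conjD D (c * ?w) = conjD D c * u"
      using ZD_mult_conj[OF sf D1 abc(3) cu] ZD_conj[OF sf D1 u] by auto
    have rel: "a * (1 - a) = (b*u) * (c * ?w)"
    proof -
      have "(b*u) * (c * ?w) = b * c * (u * ?w)" by (simp only: mult.commute mult.left_commute mult.assoc)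
      then show ?thesis using abc(4) uu by simp
    qed
    have eqs: "of_int p = a * conjD D a + b * conjD D b"
      "z0 = a * conjD D c + b * (1 - conjD D a)"
      "conjD D z0 = c * conjD D a + (1 - a) * conjD D b"
      "normD D z0 / of_int p = c * conjD D c + (1 - a) * (1 - conjD D a)"
      using M unfolding Apz_def mat2_mult mat2_eq by auto
    note alg = cz_alg[OF uu eqs]
    have "Apz D p (z0*u) = (vector [vector [a, b*u], vector [c*?w, 1 - a]] :: complex^2^2) **
                 (vector [vector [conjD D a, conjD D (c*?w)], vector [conjD D (b*u), 1 - conjD D a]])"
      unfolding Apz_def mat2_mult mat2_eq cz nz cbu ccw
      using alg by (simp add: mult.commute)
    then show "propCZ D p (z0*u)" unfolding propCZ_def using abc(1) bu cw rel by blast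
  qed
  show ?thesis using part1 part2 by blast
qed


lemma sqrtD_1: "sqrtD 1 = 1"
  by (simp add: sqrtD_def)

lemma ZD1_int: "z \<in> ZD 1 \<Longrightarrow> \<exists>n. z = of_int n"
proof -
  assume "z \<in> ZD 1"
  then obtain a b where ab: "z = (of_int a + of_int b * sqrtD 1) / 2" "a mod 2 = b mod 2"
    unfolding ZD_def by auto
  have "even (a + b)" using ab(2) by presburger
  then obtain n where n: "a + b = 2 * n" by (meson evenE)
  have "z = of_int (a + b) / 2" using ab(1) by (simp add: sqrtD_1)
  also have "\<dots> = of_int n" using n by simp
  finally show ?thesis by blast
qed

lemma int_ZD1: "(of_int n :: complex) \<in> ZD 1"
proof -
  have e: "(of_int n :: complex) = (of_int n + of_int n * sqrtD 1) / 2" by (simp add: sqrtD_1)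
  have "parD 1 n n" by (simp add: parD_def)
  then show ?thesis using e ZD_iff by blast
qed

lemma primeD_1:
  assumes p: "prime (p::int)"
  shows "primeD 1 (of_int p)"
  unfolding primeD_def
proof (intro conjI)
  show "(of_int p :: complex) \<in> ZD 1" by (rule int_ZD1)
  show "(of_int p :: complex) \<noteq> 0" using p by simp
  show "\<not> unitD 1 (of_int p)"
  proof
    assume "unitD 1 (of_int p)"
    then obtain v where v: "v \<in> ZD 1" "of_int p * v = 1" unfolding unitD_def by blast
    then obtain n where n: "v = of_int n" using ZD1_int by blast
    have "(of_int (p * n) :: complex) = of_int 1" using v(2) n by simp
    then have "p * n = 1" by (simp only: of_int_eq_iff)
    then have "p dvd 1" by (metis dvdI)
    then show False using p not_prime_unit by blast
  qed
  show "\<forall>x\<in>ZD 1. \<forall>y\<in>ZD 1. dvdD 1 (of_int p) (x * y) \<longrightarrow> dvdD 1 (of_int p) x \<or> dvdD 1 (of_int p) y"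
  proof (intro ballI impI)
    fix x y assume x: "x \<in> ZD 1" and y: "y \<in> ZD 1" and d: "dvdD 1 (of_int p) (x * y)"
    obtain m where m: "x = of_int m" using ZD1_int[OF x] by blast
    obtain n where n: "y = of_int n" using ZD1_int[OF y] by blast
    obtain c where c: "c \<in> ZD 1" "x * y = of_int p * c" using d unfolding dvdD_def by blast
    obtain k where k: "c = of_int k" using ZD1_int[OF c(1)] by blast
    have "(of_int (m * n) :: complex) = of_int (p * k)" using c(2) m n k by simp
    then have "m * n = p * k" by (simp only: of_int_eq_iff)
    then have "p dvd m * n" by (metis dvdI)
    then have "p dvd m \<or> p dvd n" using p by (simp add: prime_dvd_mult_iff)
    then show "dvdD 1 (of_int p) x \<or> dvdD 1 (of_int p) y"
    proof
      assume "p dvd m"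
      then obtain j where "m = p * j" by blast
      then have "x = of_int p * of_int j" using m by simp
      then show ?thesis unfolding dvdD_def using int_ZD1[of j] by blast
    next
      assume "p dvd n"
      then obtain j where "n = p * j" by blast
      then have "y = of_int p * of_int j" using n by simp
      then show ?thesis unfolding dvdD_def using int_ZD1[of j] by blast
    qed
  qed
qed

theorem proposition2p4:
  fixes D p :: int and z0 z u :: complex
  assumes "squarefree D"
    and "prime p"
    and "irreducibleD D (of_int p)" and "\<not> primeD D (of_int p)"
    and "z0 \<in> Ip p D" and "fundamental_solD D z0"
    and "z \<in> Ip p D"
    and "unitD D u" and "normD D u = 1" and "z = z0 * u"
  shows "(Apz D p z0 \<in> ID2 D \<longleftrightarrow> Apz D p z \<in> ID2 D) \<and> (propCZ D p z0 \<longleftrightarrow> propCZ D p z)"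
proof -
  note sf = assms(1)
  have D1: "D \<noteq> 1" using assms(4) primeD_1[OF assms(2)] by blast
  have z0: "z0 \<in> ZD D" using assms(5) unfolding Ip_def by blast
  have zZ: "z \<in> ZD D" using assms(7) unfolding Ip_def by blast
  have u: "u \<in> ZD D" using assms(8) unfolding unitD_def by blast
  have cu: "conjD D u \<in> ZD D" and ccu: "conjD D (conjD D u) = u" using ZD_conj[OF sf D1 u] by auto
  have uu: "u * conjD D u = 1" using assms(9) by (simp only: normD_def)
  have wu: "conjD D u * conjD D (conjD D u) = 1" using uu ccu by (simp add: mult.commute)
  have zback: "z * conjD D u = z0" using assms(10) uu by (simp add: mult.assoc)
  have f: "(Apz D p z0 \<in> ID2 D \<longrightarrow> Apz D p z \<in> ID2 D) \<and> (propCZ D p z0 \<longrightarrow> propCZ D p z)"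
    using transfer[OF sf D1 z0 u cu uu, of p] assms(10) by simp
  have b: "(Apz D p z \<in> ID2 D \<longrightarrow> Apz D p z0 \<in> ID2 D) \<and> (propCZ D p z \<longrightarrow> propCZ D p z0)"
    using transfer[OF sf D1 zZ cu _ wu, of p] ZD_conj[OF sf D1 cu] zback by simp
  show ?thesis using f b by blast
qed

end
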